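(* Let $A\in\mathbb{R}^{n\times n}$ be monotone (nonsingular with $A^{-1}\geq 0$) and let $(U_k,V_k,E_k)_{k=1}^{p}$ be a weak regular multisplitting of $A$. Let $H=\sum_{k=1}^{p}E_kU_k^{-1}V_k$. Let $\underline{U},\overline{U}\in\mathbb{R}^{n\times n}$ be nonsingular with $\overline{U}^{-1}\leq U_k^{-1}\leq\underline{U}^{-1}$ for each $k=1,\ldots,p$. (i) If $A=\overline{U}-\overline{V}$ is a regular splitting, then $\rho(H)\leq\rho(\overline{U}^{-1}\overline{V})$. (ii) If $A=\underline{U}-\underline{V}$ is a regular splitting, then $\rho(\underline{U}^{-1}\underline{V})\leq\rho(H)$.
   Context: Inequalities are entrywise; $\rho(\cdot)$ is the spectral radius. A splitting $A=U-V$ of $A\in\mathbb{R}^{n\times n}$ is weak regular if $U$ is nonsingular, $U^{-1}\geq 0$ and $U^{-1}V\geq 0$, and regular if $U$ is nonsingular, $U^{-1}\geq 0$ and $V\geq 0$. A weak regular multisplitting of $A$ is a triplet $(U_k,V_k,E_k)_{k=1}^{p}$ where each $A=U_k-V_k$ is a weak regular splitting and each $E_k\geq 0$ is an $n\times n$ diagonal matrix with $\sum_{k=1}^{p}E_k=I$. *)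

theory Defs
  imports "Jordan_Normal_Form.Spectral_Radius"
begin

definition mat_inv :: "real mat \<Rightarrow> real mat" where
  "mat_inv A = (SOME B. inverts_mat A B \<and> inverts_mat B A)"

definition rho :: "real mat \<Rightarrow> real" where
  "rho M = spectral_radius (map_mat complex_of_real M)"

fun mat_sum :: "nat \<Rightarrow> (nat \<Rightarrow> real mat) \<Rightarrow> nat \<Rightarrow> real mat" where
  "mat_sum n f 0 = 0\<^sub>m n n"
| "mat_sum n f (Suc p) = f p + mat_sum n f p"

definition monotone_mat :: "nat \<Rightarrow> real mat \<Rightarrow> bool" where
  "monotone_mat n A \<longleftrightarrow> A \<in> carrier_mat n n \<and> invertible_mat A \<and> 0\<^sub>m n n \<le> mat_inv A"

definition weak_regular_splitting :: "nat \<Rightarrow> real mat \<Rightarrow> real mat \<Rightarrow> real mat \<Rightarrow> bool" where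
  "weak_regular_splitting n A U V \<longleftrightarrow>
     A \<in> carrier_mat n n \<and> U \<in> carrier_mat n n \<and> V \<in> carrier_mat n n \<and> A = U - V \<and>
     invertible_mat U \<and> 0\<^sub>m n n \<le> mat_inv U \<and> 0\<^sub>m n n \<le> mat_inv U * V"

definition regular_splitting :: "nat \<Rightarrow> real mat \<Rightarrow> real mat \<Rightarrow> real mat \<Rightarrow> bool" where
  "regular_splitting n A U V \<longleftrightarrow>
     A \<in> carrier_mat n n \<and> U \<in> carrier_mat n n \<and> V \<in> carrier_mat n n \<and> A = U - V \<and>
     invertible_mat U \<and> 0\<^sub>m n n \<le> mat_inv U \<and> 0\<^sub>m n n \<le> V"

text \<open>Weak regular multisplitting (U_k, V_k, E_k), k = 0..p-1 (paper: k = 1..p).\<close>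
definition weak_regular_multisplitting ::
  "nat \<Rightarrow> real mat \<Rightarrow> nat \<Rightarrow> (nat \<Rightarrow> real mat) \<Rightarrow> (nat \<Rightarrow> real mat) \<Rightarrow> (nat \<Rightarrow> real mat) \<Rightarrow> bool" where
  "weak_regular_multisplitting n A p U V E \<longleftrightarrow>
     (\<forall>k<p. weak_regular_splitting n A (U k) (V k) \<and>
            E k \<in> carrier_mat n n \<and> diagonal_mat (E k) \<and> 0\<^sub>m n n \<le> E k) \<and>
     mat_sum n E p = 1\<^sub>m n"

end

theory Submission
  imports Defs
begin


lemma smult_smult_mat: "a \<cdot>\<^sub>m (b \<cdot>\<^sub>m (A :: 'a :: comm_ring_1 mat)) = (a * b) \<cdot>\<^sub>m A"
  by (rule eq_matI, auto)

lemma smult_mat_mult_vec: assumes "A \<in> carrier_mat n m" "v \<in> carrier_vec m"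
  shows "(a \<cdot>\<^sub>m (A :: 'a :: comm_ring_1 mat)) *\<^sub>v v = a \<cdot>\<^sub>v (A *\<^sub>v v)"
  using assms by (intro eq_vecI, auto)

lemma pow_smult_mat:
  assumes A: "(A :: 'a :: comm_ring_1 mat) \<in> carrier_mat n n"
  shows "(c \<cdot>\<^sub>m A) ^\<^sub>m k = (c ^ k) \<cdot>\<^sub>m (A ^\<^sub>m k)"
proof (induct k)
  case 0 thus ?case using A by (auto intro!: eq_matI)
next
  case (Suc k)
  have "(c \<cdot>\<^sub>m A) ^\<^sub>m Suc k = (c ^ k \<cdot>\<^sub>m A ^\<^sub>m k) * (c \<cdot>\<^sub>m A)" using Suc by simp
  also have "\<dots> = c ^ k \<cdot>\<^sub>m (A ^\<^sub>m k * (c \<cdot>\<^sub>m A))"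
    using A by (metis mult_smult_assoc_mat pow_carrier_mat smult_carrier_mat)
  also have "\<dots> = c ^ k \<cdot>\<^sub>m (c \<cdot>\<^sub>m (A ^\<^sub>m k * A))"
    using A by (metis mult_smult_distrib pow_carrier_mat)
  also have "\<dots> = c ^ Suc k \<cdot>\<^sub>m (A ^\<^sub>m Suc k)" by (simp add: smult_smult_mat mult.commute)
  finally show ?case .
qed

lemma rho_nonneg:
  assumes T: "T \<in> carrier_mat n n" and n: "n > 0"
  shows "0 \<le> rho T"
proof -
  have C: "map_mat complex_of_real T \<in> carrier_mat n n" using T by simp
  from spectral_radius_mem_max(1)[OF C n] show ?thesis unfolding rho_def by auto
qed

lemma rho_scaled_lt1:
  assumes T: "T \<in> carrier_mat n n" and n: "n > 0" and lam: "rho T < lam"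
  shows "spectral_radius ((complex_of_real (1/lam)) \<cdot>\<^sub>m map_mat complex_of_real T) < 1"
proof -
  define C where "C = map_mat complex_of_real T"
  define C' where "C' = (complex_of_real (1/lam)) \<cdot>\<^sub>m C"
  have C: "C \<in> carrier_mat n n" using T by (simp add: C_def)
  have C': "C' \<in> carrier_mat n n" using C by (simp add: C'_def)
  have lp: "lam > 0" using rho_nonneg[OF T n] lam by linarith
  have "\<forall>x \<in> norm ` spectrum C'. x < 1"
  proof
    fix x assume "x \<in> norm ` spectrum C'"
    then obtain ev where x: "x = norm ev" and ev: "eigenvalue C' ev" unfolding spectrum_def by auto
    then obtain v where v: "eigenvector C' v ev" unfolding eigenvalue_def by auto
    have vc: "v \<in> carrier_vec n" and v0: "v \<noteq> 0\<^sub>v n" and eq: "C' *\<^sub>v v = ev \<cdot>\<^sub>v v"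
      using v C' unfolding eigenvector_def by auto
    have CC: "C = complex_of_real lam \<cdot>\<^sub>m C'"
      unfolding C'_def using lp by (auto simp: smult_smult_mat)
    have "C *\<^sub>v v = (complex_of_real lam * ev) \<cdot>\<^sub>v v"
      unfolding CC using eq C' vc by (simp add: smult_mat_mult_vec[OF C' vc] smult_smult_assoc)
    hence "eigenvector C v (complex_of_real lam * ev)" using vc v0 C unfolding eigenvector_def by auto
    hence "norm (complex_of_real lam * ev) \<in> norm ` spectrum C"
      unfolding spectrum_def eigenvalue_def by auto
    from spectral_radius_mem_max(2)[OF C n this]
    have "lam * norm ev \<le> rho T" using lp unfolding rho_def C_def by (simp add: norm_mult)
    hence "lam * norm ev < lam * 1" using lam by simp
    thus "x < 1" using x lp by (simp add: mult_less_cancel_left)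
  qed
  with spectral_radius_mem_max(1)[OF C' n] show ?thesis unfolding C'_def C_def by auto
qed

lemma mat_vec_mono:
  fixes A :: "real mat"
  assumes A: "A \<in> carrier_mat n m" and A0: "0\<^sub>m n m \<le> A"
    and u: "u \<in> carrier_vec m" and w: "w \<in> carrier_vec m" and uw: "u \<le> w"
  shows "A *\<^sub>v u \<le> A *\<^sub>v w"
proof -
  have "(A *\<^sub>v u) $ i \<le> (A *\<^sub>v w) $ i" if i: "i < n" for i
  proof -
    have "(A *\<^sub>v u) $ i = (\<Sum>j<m. A $$ (i,j) * u $ j)"
      using A u i by (simp add: scalar_prod_def lessThan_atLeast0)
    also have "\<dots> \<le> (\<Sum>j<m. A $$ (i,j) * w $ j)"
    proof (rule sum_mono)
      fix j assume j: "j \<in> {..<m}"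
      have "0 \<le> A $$ (i,j)" using A0 A i j unfolding less_eq_mat_def by auto
      moreover have "u $ j \<le> w $ j" using uw w j unfolding less_eq_vec_def by auto
      ultimately show "A $$ (i,j) * u $ j \<le> A $$ (i,j) * w $ j" by (rule mult_left_mono[rotated])
    qed
    also have "\<dots> = (A *\<^sub>v w) $ i"
      using A w i by (simp add: scalar_prod_def lessThan_atLeast0)
    finally show ?thesis .
  qed
  thus ?thesis using A unfolding less_eq_vec_def by auto
qed

lemma mat_mult_nonneg:
  fixes A B :: "real mat"
  assumes A: "A \<in> carrier_mat n m" and A0: "0\<^sub>m n m \<le> A"
    and B: "B \<in> carrier_mat m k" and B0: "0\<^sub>m m k \<le> B"
  shows "0\<^sub>m n k \<le> A * B"
proof -
  have "0 \<le> (A * B) $$ (i,j)" if i: "i < n" and j: "j < k" for i j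
  proof -
    have "(A * B) $$ (i,j) = (\<Sum>l<m. A $$ (i,l) * B $$ (l,j))"
      using A B i j by (simp add: scalar_prod_def lessThan_atLeast0)
    also have "\<dots> \<ge> 0"
    proof (rule sum_nonneg)
      fix l assume l: "l \<in> {..<m}"
      have "0 \<le> A $$ (i,l)" using A0 A i l unfolding less_eq_mat_def by auto
      moreover have "0 \<le> B $$ (l,j)" using B0 B j l unfolding less_eq_mat_def by auto
      ultimately show "0 \<le> A $$ (i,l) * B $$ (l,j)" by simp
    qed
    finally show ?thesis .
  qed
  thus ?thesis using A B unfolding less_eq_mat_def by auto
qed

lemma pow_nonneg:
  fixes T :: "real mat"
  assumes T: "T \<in> carrier_mat n n" and T0: "0\<^sub>m n n \<le> T"
  shows "0\<^sub>m n n \<le> T ^\<^sub>m k"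
proof (induct k)
  case 0 thus ?case using T unfolding less_eq_mat_def by auto
next
  case (Suc k)
  thus ?case using mat_mult_nonneg[OF pow_carrier_mat[OF T] Suc T T0] by simp
qed

lemma rho_lower:
  fixes T :: "real mat"
  assumes T: "T \<in> carrier_mat n n" and T0: "0\<^sub>m n n \<le> T"
    and y: "y \<in> carrier_vec n" and y0: "0\<^sub>v n \<le> y" and yn: "y \<noteq> 0\<^sub>v n"
    and ineq: "lam \<cdot>\<^sub>v y \<le> T *\<^sub>v y"
  shows "lam \<le> rho T"
proof (rule ccontr)
  assume "\<not> lam \<le> rho T"
  hence lt: "rho T < lam" by simp
  have n: "n > 0" using y yn by (cases n, auto)
  define l where "l = (rho T + lam) / 2"
  have l1: "rho T < l" and l2: "l < lam" using lt by (auto simp: l_def)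
  have lp: "l > 0" using rho_nonneg[OF T n] l1 by linarith
  define C where "C = map_mat complex_of_real T"
  have C: "C \<in> carrier_mat n n" using T by (simp add: C_def)
  define C' where "C' = complex_of_real (1/l) \<cdot>\<^sub>m C"
  have C': "C' \<in> carrier_mat n n" using C by (simp add: C'_def)
  have "spectral_radius C' < 1" using rho_scaled_lt1[OF T n l1] unfolding C'_def C_def .
  from spectral_radius_jnf_norm_bound_less_1_upper_triangular[OF C' this]
  obtain c where cb: "\<And>k. norm_bound (C' ^\<^sub>m k) c" by auto
  have Tk: "(T ^\<^sub>m k) $$ (i,j) \<le> c * l ^ k" if i: "i < n" and j: "j < n" for i j k
  proof -
    have "C' ^\<^sub>m k = (complex_of_real (1/l)) ^ k \<cdot>\<^sub>m (C ^\<^sub>m k)"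
      unfolding C'_def by (rule pow_smult_mat[OF C])
    also have "C ^\<^sub>m k = map_mat complex_of_real (T ^\<^sub>m k)"
      unfolding C_def by (rule of_real_hom.mat_hom_pow[OF T, symmetric])
    finally have "(C' ^\<^sub>m k) $$ (i,j) = complex_of_real ((1/l)^k * (T ^\<^sub>m k) $$ (i,j))"
      using T i j by simp
    moreover have "norm ((C' ^\<^sub>m k) $$ (i,j)) \<le> c" using cb[of k] C' i j unfolding norm_bound_def by auto
    ultimately have "norm (complex_of_real ((1/l)^k * (T ^\<^sub>m k) $$ (i,j))) \<le> c" by metis
    hence "\<bar>(1/l)^k * (T ^\<^sub>m k) $$ (i,j)\<bar> \<le> c" by (simp only: norm_of_real)
    hence "(1/l)^k * (T ^\<^sub>m k) $$ (i,j) \<le> c" by linarith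
    hence "l^k * ((1/l)^k * (T ^\<^sub>m k) $$ (i,j)) \<le> l^k * c" using lp by (simp add: mult_left_mono)
    thus ?thesis using lp by (simp add: power_one_over field_simps)
  qed
  have pw: "lam ^ k \<cdot>\<^sub>v y \<le> T ^\<^sub>m k *\<^sub>v y" for k
  proof (induct k)
    case 0 thus ?case using y T by simp
  next
    case (Suc k)
    have Tkc: "T ^\<^sub>m k \<in> carrier_mat n n" using T by simp
    have "lam ^ Suc k \<cdot>\<^sub>v y = lam \<cdot>\<^sub>v (lam ^ k \<cdot>\<^sub>v y)" by (simp add: smult_smult_assoc mult.commute)
    also have "\<dots> \<le> lam \<cdot>\<^sub>v (T ^\<^sub>m k *\<^sub>v y)"
      using Suc lp l2 unfolding less_eq_vec_def by (auto intro: mult_left_mono)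
    also have "\<dots> = T ^\<^sub>m k *\<^sub>v (lam \<cdot>\<^sub>v y)"
      using Tkc y by (simp add: mult_mat_vec)
    also have "\<dots> \<le> T ^\<^sub>m k *\<^sub>v (T *\<^sub>v y)"
      by (rule mat_vec_mono[OF Tkc pow_nonneg[OF T T0]], insert y T ineq, auto)
    also have "\<dots> = T ^\<^sub>m Suc k *\<^sub>v y" using T y Tkc by (simp add: assoc_mult_mat_vec[OF Tkc T y])
    finally show ?case .
  qed
  from yn y obtain i where i: "i < n" and yi: "y $ i \<noteq> 0" by (auto simp: vec_eq_iff)
  have yi0: "y $ i > 0" using y0 i yi unfolding less_eq_vec_def by force
  define S where "S = (\<Sum>j<n. y $ j)"
  have bnd: "(lam / l) ^ k \<le> c * S / y $ i" for k
  proof -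
    have "lam ^ k * y $ i \<le> (T ^\<^sub>m k *\<^sub>v y) $ i" using pw[of k] i y unfolding less_eq_vec_def by auto
    also have "\<dots> = (\<Sum>j<n. (T ^\<^sub>m k) $$ (i,j) * y $ j)"
      using T y i by (simp add: scalar_prod_def lessThan_atLeast0)
    also have "\<dots> \<le> (\<Sum>j<n. (c * l ^ k) * y $ j)"
      by (rule sum_mono, rule mult_right_mono, rule Tk[OF i], auto,
          insert y0, auto simp: less_eq_vec_def)
    also have "\<dots> = l ^ k * (c * S)" by (simp add: S_def sum_distrib_left mult_ac)
    finally have "lam ^ k * y $ i \<le> l ^ k * (c * S)" .
    hence "lam ^ k / l ^ k \<le> c * S / y $ i" using lp yi0 by (simp add: field_simps)
    thus ?thesis by (simp add: power_divide)
  qed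
  have "1 < lam / l" using l2 lp by simp
  from real_arch_pow[OF this, of "c * S / y $ i"] obtain k where "c * S / y $ i < (lam / l) ^ k" by auto
  with bnd[of k] show False by simp
qed

lemma rho_transpose:
  assumes T: "T \<in> carrier_mat n n"
  shows "rho (transpose_mat T) = rho T"
proof -
  have C: "map_mat complex_of_real T \<in> carrier_mat n n" using T by simp
  have "map_mat complex_of_real (transpose_mat T) = transpose_mat (map_mat complex_of_real T)"
    by (simp add: map_mat_transpose)
  moreover have "spectrum (transpose_mat (map_mat complex_of_real T)) = spectrum (map_mat complex_of_real T)"
    using spectrum_root_char_poly[OF C] spectrum_root_char_poly[of "transpose_mat (map_mat complex_of_real T)" n] C
    by (simp add: char_poly_transpose_mat[OF C])
  ultimately show ?thesis unfolding rho_def spectral_radius_def by simp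
qed

lemma eigen_abs:
  fixes T :: "real mat"
  assumes T: "T \<in> carrier_mat n n" and T0: "0\<^sub>m n n \<le> T" and n: "n > 0"
  shows "\<exists>u \<in> carrier_vec n. 0\<^sub>v n \<le> u \<and> u \<noteq> 0\<^sub>v n \<and> rho T \<cdot>\<^sub>v u \<le> T *\<^sub>v u"
proof -
  define C where "C = map_mat complex_of_real T"
  have C: "C \<in> carrier_mat n n" using T by (simp add: C_def)
  from spectral_radius_mem_max(1)[OF C n] obtain ev where ev: "ev \<in> spectrum C"
    and nev: "norm ev = rho T" unfolding rho_def C_def by auto
  from ev obtain v where "eigenvector C v ev" unfolding spectrum_def eigenvalue_def by auto
  hence v: "v \<in> carrier_vec n" and v0: "v \<noteq> 0\<^sub>v n" and eq: "C *\<^sub>v v = ev \<cdot>\<^sub>v v"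
    using C unfolding eigenvector_def by auto
  define u where "u = vec n (\<lambda>i. cmod (v $ i))"
  have u: "u \<in> carrier_vec n" by (simp add: u_def)
  have "0\<^sub>v n \<le> u" unfolding u_def less_eq_vec_def by auto
  moreover have "u \<noteq> 0\<^sub>v n"
  proof
    assume "u = 0\<^sub>v n"
    hence "\<forall>i<n. v $ i = 0" unfolding u_def by (metis index_vec index_zero_vec(1) norm_eq_zero)
    thus False using v v0 by (auto simp: vec_eq_iff)
  qed
  moreover have "rho T \<cdot>\<^sub>v u \<le> T *\<^sub>v u"
  proof -
    have "rho T * u $ i \<le> (T *\<^sub>v u) $ i" if i: "i < n" for i
    proof -
      have "ev * v $ i = (C *\<^sub>v v) $ i" using eq i v by simp
      also have "\<dots> = (\<Sum>j<n. complex_of_real (T $$ (i,j)) * v $ j)"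
        using C T v i by (simp add: C_def scalar_prod_def lessThan_atLeast0)
      finally have e: "ev * v $ i = (\<Sum>j<n. complex_of_real (T $$ (i,j)) * v $ j)" .
      have "rho T * u $ i = norm (ev * v $ i)" using nev i by (simp add: u_def norm_mult)
      also have "\<dots> \<le> (\<Sum>j<n. norm (complex_of_real (T $$ (i,j)) * v $ j))" unfolding e by (rule norm_sum)
      also have "\<dots> = (\<Sum>j<n. T $$ (i,j) * u $ j)"
      proof (rule sum.cong[OF refl])
        fix j assume j: "j \<in> {..<n}"
        have "0 \<le> T $$ (i,j)" using T0 T i j unfolding less_eq_mat_def by auto
        thus "norm (complex_of_real (T $$ (i,j)) * v $ j) = T $$ (i,j) * u $ j"
          using j by (simp add: u_def norm_mult)
      qed
      also have "\<dots> = (T *\<^sub>v u) $ i" using T u i by (simp add: scalar_prod_def lessThan_atLeast0)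
      finally show ?thesis .
    qed
    thus ?thesis using T u unfolding less_eq_vec_def by auto
  qed
  ultimately show ?thesis using u by blast
qed



lemma vle: "v \<in> carrier_vec n \<Longrightarrow> w \<in> carrier_vec n \<Longrightarrow> v \<le> w \<longleftrightarrow> (\<forall>i<n. v $ i \<le> w $ i)"
  unfolding less_eq_vec_def by auto

lemma mat_vec_zero': "A \<in> carrier_mat n m \<Longrightarrow> A *\<^sub>v 0\<^sub>v m = (0\<^sub>v n :: 'a :: semiring_0 vec)"
  by (intro eq_vecI, auto simp: scalar_prod_def)

lemma mat_vec_mono2:
  fixes B C :: "real mat"
  assumes B: "B \<in> carrier_mat n m" and C: "C \<in> carrier_mat n m" and BC: "B \<le> C"
    and w: "w \<in> carrier_vec m" and w0: "0\<^sub>v m \<le> w"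
  shows "B *\<^sub>v w \<le> C *\<^sub>v w"
proof -
  have "0\<^sub>m n m \<le> C - B" using B C BC unfolding less_eq_mat_def by auto
  have CB: "C - B \<in> carrier_mat n m" using B C by (simp add: minus_carrier_mat)
  have "(C - B) *\<^sub>v 0\<^sub>v m \<le> (C - B) *\<^sub>v w" by (rule mat_vec_mono[OF CB \<open>0\<^sub>m n m \<le> C - B\<close> _ w w0], simp)
  hence "0\<^sub>v n \<le> (C - B) *\<^sub>v w" using mat_vec_zero'[OF CB] by simp
  hence "0\<^sub>v n \<le> C *\<^sub>v w - B *\<^sub>v w" using B C w by (simp add: minus_mult_distrib_mat_vec)
  thus ?thesis using B C w unfolding less_eq_vec_def by auto
qed

lemma nonneg_pos_comp:
  fixes u :: "real vec"
  assumes u: "u \<in> carrier_vec n" "0\<^sub>v n \<le> u" "u \<noteq> 0\<^sub>v n"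
  shows "\<exists>i<n. u $ i > 0"
proof -
  from u obtain i where i: "i < n" and ui: "u $ i \<noteq> 0" by (auto simp: vec_eq_iff)
  have "u $ i \<ge> 0" using u i unfolding less_eq_vec_def by auto
  thus ?thesis using i ui by force
qed

lemma core_lower:
  fixes A Ai Ui Vlo M H :: "real mat"
  assumes c: "A \<in> carrier_mat n n" "Ai \<in> carrier_mat n n" "Ui \<in> carrier_mat n n"
      "Vlo \<in> carrier_mat n n" "M \<in> carrier_mat n n" "H \<in> carrier_mat n n"
    and Ai0: "0\<^sub>m n n \<le> Ai" and V0: "0\<^sub>m n n \<le> Vlo" and Ui0: "0\<^sub>m n n \<le> Ui"
    and h1: "Ai * Vlo = Ui * Vlo + Ai * Vlo * (Ui * Vlo)"
    and h2: "A * Ai = 1\<^sub>m n"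
    and h3: "H = 1\<^sub>m n - M * A"
    and h4: "M \<le> Ui"
    and H0: "0\<^sub>m n n \<le> H"
  shows "rho (Ui * Vlo) \<le> rho H"
proof (cases "n = 0")
  case True
  hence "Ui * Vlo = H" using c by (intro eq_matI, auto)
  thus ?thesis by simp
next
  case False
  hence n: "n > 0" by simp
  define Tl where "Tl = Ui * Vlo"
  define L where "L = Ai * Vlo"
  define t where "t = rho Tl"
  have Tl: "Tl \<in> carrier_mat n n" and L: "L \<in> carrier_mat n n" using c by (auto simp: Tl_def L_def)
  have Tl0: "0\<^sub>m n n \<le> Tl" unfolding Tl_def by (rule mat_mult_nonneg[OF c(3) Ui0 c(4) V0])
  have L0: "0\<^sub>m n n \<le> L" unfolding L_def by (rule mat_mult_nonneg[OF c(2) Ai0 c(4) V0])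
  show ?thesis
  proof (cases "t = 0")
    case True thus ?thesis using rho_nonneg[OF c(6) n] by (simp add: t_def Tl_def)
  next
    case False
    have tp: "t > 0" using False rho_nonneg[OF Tl n] by (simp add: t_def)
    from eigen_abs[OF Tl Tl0 n] obtain u where u: "u \<in> carrier_vec n" and u0: "0\<^sub>v n \<le> u"
      and un: "u \<noteq> 0\<^sub>v n" and tu: "t \<cdot>\<^sub>v u \<le> Tl *\<^sub>v u" by (auto simp: t_def)
    define y where "y = L *\<^sub>v u"
    have y: "y \<in> carrier_vec n" using L u by (simp add: y_def)
    have Vu: "Vlo *\<^sub>v u \<in> carrier_vec n" using c u by simp
    have Vu0: "0\<^sub>v n \<le> Vlo *\<^sub>v u"
      using mat_vec_mono[OF c(4) V0 _ u u0] c(4) by (simp add: mat_vec_zero')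
    have Ay: "A *\<^sub>v y = Vlo *\<^sub>v u"
    proof -
      have "A *\<^sub>v y = A *\<^sub>v (Ai *\<^sub>v (Vlo *\<^sub>v u))" using c u by (simp add: y_def L_def)
      also have "\<dots> = (A * Ai) *\<^sub>v (Vlo *\<^sub>v u)" using c u by (simp add: assoc_mult_mat_vec)
      also have "\<dots> = Vlo *\<^sub>v u" using h2 c u by simp
      finally show ?thesis .
    qed
    have Tlu: "Tl *\<^sub>v u \<in> carrier_vec n" using Tl u by simp
    have tu0: "0\<^sub>v n \<le> t \<cdot>\<^sub>v u" using u0 tp unfolding less_eq_vec_def by auto
    have Tlu0: "0\<^sub>v n \<le> Tl *\<^sub>v u" using order.trans[OF tu0 tu] .
    have ysplit: "y = Tl *\<^sub>v u + L *\<^sub>v (Tl *\<^sub>v u)"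
    proof -
      have "y = (Tl + L * Tl) *\<^sub>v u" using h1 by (simp add: y_def L_def Tl_def)
      also have "\<dots> = Tl *\<^sub>v u + L *\<^sub>v (Tl *\<^sub>v u)" using Tl L u
        by (simp add: add_mult_distrib_mat_vec)
      finally show ?thesis .
    qed
    have LTl0: "0\<^sub>v n \<le> L *\<^sub>v (Tl *\<^sub>v u)"
      using mat_vec_mono[OF L L0 _ Tlu Tlu0] L by (simp add: mat_vec_zero')
    have LTl: "t \<cdot>\<^sub>v y \<le> L *\<^sub>v (Tl *\<^sub>v u)"
    proof -
      have "t \<cdot>\<^sub>v y = L *\<^sub>v (t \<cdot>\<^sub>v u)" using L u by (simp add: y_def mult_mat_vec)
      also have "\<dots> \<le> L *\<^sub>v (Tl *\<^sub>v u)" by (rule mat_vec_mono[OF L L0 _ Tlu tu], insert u, simp)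
      finally show ?thesis .
    qed
    have Hy: "t \<cdot>\<^sub>v y \<le> H *\<^sub>v y"
    proof -
      have "H *\<^sub>v y = y - M *\<^sub>v (Vlo *\<^sub>v u)"
      proof -
        have "H *\<^sub>v y = 1\<^sub>m n *\<^sub>v y - (M * A) *\<^sub>v y"
          unfolding h3 by (rule minus_mult_distrib_mat_vec, insert c y, auto)
        also have "(M * A) *\<^sub>v y = M *\<^sub>v (A *\<^sub>v y)" using c y by (simp add: assoc_mult_mat_vec)
        finally show ?thesis using y Ay by simp
      qed
      moreover have "M *\<^sub>v (Vlo *\<^sub>v u) \<le> Ui *\<^sub>v (Vlo *\<^sub>v u)"
        by (rule mat_vec_mono2[OF c(5) c(3) h4 Vu Vu0])
      moreover have "Ui *\<^sub>v (Vlo *\<^sub>v u) = Tl *\<^sub>v u" using c u by (simp add: Tl_def)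
      ultimately have le1: "y - Tl *\<^sub>v u \<le> H *\<^sub>v y" using y Vu c Tlu unfolding less_eq_vec_def by auto
      have LT: "L *\<^sub>v (Tl *\<^sub>v u) \<in> carrier_vec n" using L Tlu by simp
      have d: "dim_vec (Tl *\<^sub>v u) = n" "dim_vec (L *\<^sub>v (Tl *\<^sub>v u)) = n" using LT Tlu L Tl by auto
      have e: "y - Tl *\<^sub>v u = L *\<^sub>v (Tl *\<^sub>v u)"
        unfolding ysplit
      proof (rule eq_vecI)
        fix i assume "i < dim_vec (L *\<^sub>v (Tl *\<^sub>v u))"
        hence i: "i < n" using d by simp
        show "(Tl *\<^sub>v u + L *\<^sub>v (Tl *\<^sub>v u) - Tl *\<^sub>v u) $ i = (L *\<^sub>v (Tl *\<^sub>v u)) $ i"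
          using i d by simp
      qed (insert L Tl, simp)
      from le1 have "L *\<^sub>v (Tl *\<^sub>v u) \<le> H *\<^sub>v y" by (simp only: e)
      from order.trans[OF LTl this] show ?thesis .
    qed
    have yi: "y $ i = (Tl *\<^sub>v u) $ i + (L *\<^sub>v (Tl *\<^sub>v u)) $ i" if i: "i < n" for i
    proof -
      have "dim_vec (L *\<^sub>v (Tl *\<^sub>v u)) = n" using L by simp
      hence "(Tl *\<^sub>v u + L *\<^sub>v (Tl *\<^sub>v u)) $ i = (Tl *\<^sub>v u) $ i + (L *\<^sub>v (Tl *\<^sub>v u)) $ i"
        using i by (simp only: index_add_vec(1))
      thus ?thesis by (subst ysplit)
    qed
    have p1: "0 \<le> (Tl *\<^sub>v u) $ i" if "i < n" for i using Tlu0 that Tl unfolding less_eq_vec_def by auto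
    have p2: "0 \<le> (L *\<^sub>v (Tl *\<^sub>v u)) $ i" if "i < n" for i using LTl0 that L unfolding less_eq_vec_def by auto
    have y0: "0\<^sub>v n \<le> y" using y unfolding less_eq_vec_def
      by (auto simp del: index_mult_mat_vec simp add: yi p1 p2 add_nonneg_nonneg)
    have yn: "y \<noteq> 0\<^sub>v n"
    proof -
      from nonneg_pos_comp[OF u u0 un] obtain i where i: "i < n" and ui: "u $ i > 0" by auto
      have "t * u $ i \<le> (Tl *\<^sub>v u) $ i" using tu i u Tl unfolding less_eq_vec_def by auto
      moreover have "t * u $ i > 0" using tp ui by simp
      ultimately have "y $ i > 0" using yi[OF i] p2[OF i] by linarith
      thus ?thesis using i by auto
    qed
    from rho_lower[OF c(6) H0 y y0 yn Hy] show ?thesis by (simp add: t_def Tl_def)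
  qed
qed

lemma core_upper:
  fixes B P Q W X G :: "real mat"
  assumes c: "B \<in> carrier_mat n n" "P \<in> carrier_mat n n" "Q \<in> carrier_mat n n"
      "W \<in> carrier_mat n n" "X \<in> carrier_mat n n" "G \<in> carrier_mat n n"
    and X0: "0\<^sub>m n n \<le> X" and W0: "0\<^sub>m n n \<le> W" and Q0: "0\<^sub>m n n \<le> Q"
    and XB: "X * B = 1\<^sub>m n" and BX: "B * X = 1\<^sub>m n"
    and QP: "Q \<le> P" and QB: "Q * B = 1\<^sub>m n - Q * W"
    and G: "G = 1\<^sub>m n - B * P" and G0: "0\<^sub>m n n \<le> G"
  shows "rho G \<le> rho (W * Q)"
proof (cases "n = 0")
  case True
  hence "W * Q = G" using c by (intro eq_matI, auto)
  thus ?thesis by simp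
next
  case False
  hence n: "n > 0" by simp
  define h where "h = rho G"
  have WQ: "W * Q \<in> carrier_mat n n" using c by simp
  have WQ0: "0\<^sub>m n n \<le> W * Q" by (rule mat_mult_nonneg[OF c(4) W0 c(3) Q0])
  show ?thesis
  proof (cases "h = 0")
    case True thus ?thesis using rho_nonneg[OF WQ n] by (simp add: h_def)
  next
    case False
    have hp: "h > 0" using False rho_nonneg[OF c(6) n] by (simp add: h_def)
    from eigen_abs[OF c(6) G0 n] obtain u where u: "u \<in> carrier_vec n" and u0: "0\<^sub>v n \<le> u"
      and un: "u \<noteq> 0\<^sub>v n" and hu: "h \<cdot>\<^sub>v u \<le> G *\<^sub>v u" by (auto simp: h_def)
    define z where "z = X *\<^sub>v u"
    have z: "z \<in> carrier_vec n" using c u by (simp add: z_def)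
    have z0: "0\<^sub>v n \<le> z" using mat_vec_mono[OF c(5) X0 _ u u0] c(5) by (simp add: mat_vec_zero' z_def)
    have Pu: "P *\<^sub>v u \<in> carrier_vec n" using c u by simp
    have BPu: "B *\<^sub>v (P *\<^sub>v u) \<in> carrier_vec n" using c u by simp
    have Gu: "G *\<^sub>v u = u - B *\<^sub>v (P *\<^sub>v u)"
    proof -
      have "G *\<^sub>v u = 1\<^sub>m n *\<^sub>v u - (B * P) *\<^sub>v u"
        unfolding G by (rule minus_mult_distrib_mat_vec, insert c u, auto)
      also have "(B * P) *\<^sub>v u = B *\<^sub>v (P *\<^sub>v u)" using c u by (simp add: assoc_mult_mat_vec)
      finally show ?thesis using u by simp
    qed
    have "X *\<^sub>v (h \<cdot>\<^sub>v u) \<le> X *\<^sub>v (G *\<^sub>v u)"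
      by (rule mat_vec_mono[OF c(5) X0 _ _ hu], insert u c, auto)
    also have "X *\<^sub>v (G *\<^sub>v u) = z - P *\<^sub>v u"
    proof -
      have "X *\<^sub>v (G *\<^sub>v u) = X *\<^sub>v u - X *\<^sub>v (B *\<^sub>v (P *\<^sub>v u))"
        unfolding Gu by (rule mult_minus_distrib_mat_vec[OF c(5) u BPu])
      also have "X *\<^sub>v (B *\<^sub>v (P *\<^sub>v u)) = (X * B) *\<^sub>v (P *\<^sub>v u)"
        using c Pu by (simp add: assoc_mult_mat_vec)
      finally show ?thesis using Pu by (simp add: XB z_def)
    qed
    finally have i1: "X *\<^sub>v (h \<cdot>\<^sub>v u) \<le> z - P *\<^sub>v u" .
    have Xhu: "X *\<^sub>v (h \<cdot>\<^sub>v u) = h \<cdot>\<^sub>v z" using c u by (simp add: z_def mult_mat_vec)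
    have uBz: "u = B *\<^sub>v z"
    proof -
      have "B *\<^sub>v z = (B * X) *\<^sub>v u" using c u by (simp add: z_def assoc_mult_mat_vec)
      thus ?thesis using BX u by simp
    qed
    have QWz: "Q *\<^sub>v (W *\<^sub>v z) \<in> carrier_vec n" using c z by simp
    have Qu: "Q *\<^sub>v u = z - Q *\<^sub>v (W *\<^sub>v z)"
    proof -
      have "Q *\<^sub>v u = (Q * B) *\<^sub>v z" unfolding uBz using c z by (simp add: assoc_mult_mat_vec)
      also have "\<dots> = 1\<^sub>m n *\<^sub>v z - (Q * W) *\<^sub>v z"
        unfolding QB by (rule minus_mult_distrib_mat_vec, insert c z, auto)
      also have "(Q * W) *\<^sub>v z = Q *\<^sub>v (W *\<^sub>v z)" using c z by (simp add: assoc_mult_mat_vec)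
      finally show ?thesis using z by simp
    qed
    have QPu: "Q *\<^sub>v u \<le> P *\<^sub>v u" by (rule mat_vec_mono2[OF c(3) c(2) QP u u0])
    have hz: "h \<cdot>\<^sub>v z \<le> Q *\<^sub>v (W *\<^sub>v z)"
    proof -
      have "\<forall>i<n. h * z $ i \<le> z $ i - (P *\<^sub>v u) $ i"
        using i1 Xhu z Pu unfolding less_eq_vec_def by auto
      moreover have "\<forall>i<n. z $ i - (Q *\<^sub>v (W *\<^sub>v z)) $ i \<le> (P *\<^sub>v u) $ i"
        using QPu Qu z QWz Pu c unfolding less_eq_vec_def by auto
      ultimately have "\<forall>i<n. h * z $ i \<le> (Q *\<^sub>v (W *\<^sub>v z)) $ i"
        by (smt (verit))
      thus ?thesis using z QWz c unfolding less_eq_vec_def by auto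
    qed
    define w where "w = W *\<^sub>v z"
    have w: "w \<in> carrier_vec n" using c z by (simp add: w_def)
    have w0: "0\<^sub>v n \<le> w" using mat_vec_mono[OF c(4) W0 _ z z0] c(4) by (simp add: mat_vec_zero' w_def)
    have hw: "h \<cdot>\<^sub>v w \<le> (W * Q) *\<^sub>v w"
    proof -
      have "h \<cdot>\<^sub>v w = W *\<^sub>v (h \<cdot>\<^sub>v z)" using c z by (simp add: w_def mult_mat_vec)
      also have "\<dots> \<le> W *\<^sub>v (Q *\<^sub>v (W *\<^sub>v z))" by (rule mat_vec_mono[OF c(4) W0 _ QWz hz], insert z, simp)
      also have "\<dots> = (W * Q) *\<^sub>v w" using c z by (simp add: w_def assoc_mult_mat_vec)
      finally show ?thesis .
    qed
    have wn: "w \<noteq> 0\<^sub>v n"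
    proof
      assume w00: "w = 0\<^sub>v n"
      have zn: "z \<noteq> 0\<^sub>v n" using uBz un c mat_vec_zero'[OF c(1)] by auto
      from nonneg_pos_comp[OF z z0 zn] obtain i where i: "i < n" and zi: "z $ i > 0" by auto
      have "Q *\<^sub>v (W *\<^sub>v z) = 0\<^sub>v n" using w00 c by (simp add: w_def[symmetric] mat_vec_zero')
      hence "h * z $ i \<le> 0" using hz i z unfolding less_eq_vec_def by auto
      moreover have "h * z $ i > 0" using hp zi by simp
      ultimately show False by linarith
    qed
    from rho_lower[OF WQ WQ0 w w0 wn hw] show ?thesis by (simp add: h_def)
  qed
qed



lemma inv_props:
  assumes U: "U \<in> carrier_mat n n" and inv: "invertible_mat U"
  shows "mat_inv U \<in> carrier_mat n n" "U * mat_inv U = 1\<^sub>m n" "mat_inv U * U = 1\<^sub>m n"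
proof -
  from inv obtain B where "inverts_mat U B \<and> inverts_mat B U" unfolding invertible_mat_def by auto
  hence ex: "\<exists>B. inverts_mat U B \<and> inverts_mat B U" by auto
  have s: "inverts_mat U (mat_inv U) \<and> inverts_mat (mat_inv U) U"
    unfolding mat_inv_def by (rule someI_ex[OF ex])
  hence 1: "U * mat_inv U = 1\<^sub>m n" and 2: "mat_inv U * U = 1\<^sub>m (dim_row (mat_inv U))"
    using U unfolding inverts_mat_def by auto
  have "dim_col (mat_inv U) = n" using arg_cong[OF 1, of dim_col] by simp
  moreover have "dim_row (mat_inv U) = n" using arg_cong[OF 2, of dim_col] U by simp
  ultimately show c: "mat_inv U \<in> carrier_mat n n" by auto
  show "U * mat_inv U = 1\<^sub>m n" by (rule 1)
  show "mat_inv U * U = 1\<^sub>m n" using 2 c by simp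
qed

lemma mat_sum_carrier: "(\<And>k. k < p \<Longrightarrow> f k \<in> carrier_mat n n) \<Longrightarrow> mat_sum n f p \<in> carrier_mat n n"
  by (induct p, auto)

lemma le_mat_entries:
  fixes A B :: "real mat"
  assumes "A \<in> carrier_mat n n" "B \<in> carrier_mat n n"
  shows "A \<le> B \<longleftrightarrow> (\<forall>i<n. \<forall>j<n. A $$ (i,j) \<le> B $$ (i,j))"
  using assms unfolding less_eq_mat_def by auto

lemma mat_sum_mono:
  fixes f g :: "nat \<Rightarrow> real mat"
  shows "(\<And>k. k < p \<Longrightarrow> f k \<in> carrier_mat n n) \<Longrightarrow> (\<And>k. k < p \<Longrightarrow> g k \<in> carrier_mat n n)
    \<Longrightarrow> (\<And>k. k < p \<Longrightarrow> f k \<le> g k) \<Longrightarrow> mat_sum n f p \<le> mat_sum n g p"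
proof (induct p)
  case 0 show ?case by simp
next
  case (Suc p)
  have S: "mat_sum n f p \<in> carrier_mat n n" "mat_sum n g p \<in> carrier_mat n n"
    using Suc.prems by (auto intro!: mat_sum_carrier)
  have fp: "f p \<in> carrier_mat n n" "g p \<in> carrier_mat n n" using Suc.prems(1,2)[of p] by simp_all
  have S2: "mat_sum n f (Suc p) \<in> carrier_mat n n" "mat_sum n g (Suc p) \<in> carrier_mat n n"
    using S fp by simp_all
  have i1: "mat_sum n f p \<le> mat_sum n g p" by (rule Suc.hyps, insert Suc.prems, auto)
  have i2: "f p \<le> g p" by (rule Suc.prems(3), simp)
  have a1: "\<forall>i<n. \<forall>j<n. mat_sum n f p $$ (i,j) \<le> mat_sum n g p $$ (i,j)"
    using i1 le_mat_entries[OF S] by blast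
  have a2: "\<forall>i<n. \<forall>j<n. f p $$ (i,j) \<le> g p $$ (i,j)"
    using i2 le_mat_entries[OF fp] by blast
  have "\<forall>i<n. \<forall>j<n. mat_sum n f (Suc p) $$ (i,j) \<le> mat_sum n g (Suc p) $$ (i,j)"
  proof (intro allI impI)
    fix i j assume i: "i < n" and j: "j < n"
    have "mat_sum n f (Suc p) $$ (i,j) = f p $$ (i,j) + mat_sum n f p $$ (i,j)"
      "mat_sum n g (Suc p) $$ (i,j) = g p $$ (i,j) + mat_sum n g p $$ (i,j)"
      using S i j by (simp_all add: index_add_mat)
    thus "mat_sum n f (Suc p) $$ (i,j) \<le> mat_sum n g (Suc p) $$ (i,j)" using a1 a2 i j
      by (simp add: add_mono)
  qed
  thus ?case using le_mat_entries[OF S2] by blast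
qed

lemma mat_sum_nonneg:
  fixes f :: "nat \<Rightarrow> real mat"
  shows "(\<And>k. k < p \<Longrightarrow> f k \<in> carrier_mat n n) \<Longrightarrow> (\<And>k. k < p \<Longrightarrow> 0\<^sub>m n n \<le> f k) \<Longrightarrow> 0\<^sub>m n n \<le> mat_sum n f p"
proof -
  assume a: "\<And>k. k < p \<Longrightarrow> f k \<in> carrier_mat n n" "\<And>k. k < p \<Longrightarrow> 0\<^sub>m n n \<le> f k"
  have "mat_sum n (\<lambda>k. 0\<^sub>m n n) p \<le> mat_sum n f p" by (rule mat_sum_mono, insert a, auto)
  moreover have "mat_sum n (\<lambda>k. 0\<^sub>m n n) p = (0\<^sub>m n n :: real mat)"
    by (induct p, auto)
  ultimately show ?thesis by simp
qed

lemma mat_sum_minus: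
  fixes f g :: "nat \<Rightarrow> real mat"
  shows "(\<And>k. k < p \<Longrightarrow> f k \<in> carrier_mat n n) \<Longrightarrow> (\<And>k. k < p \<Longrightarrow> g k \<in> carrier_mat n n)
    \<Longrightarrow> mat_sum n (\<lambda>k. f k - g k) p = mat_sum n f p - mat_sum n g p"
proof (induct p)
  case 0 thus ?case by (intro eq_matI, auto)
next
  case (Suc p)
  have S: "mat_sum n f p \<in> carrier_mat n n" "mat_sum n g p \<in> carrier_mat n n"
    using Suc by (auto intro!: mat_sum_carrier)
  have IH: "mat_sum n (\<lambda>k. f k - g k) p = mat_sum n f p - mat_sum n g p" using Suc by auto
  have fp: "f p \<in> carrier_mat n n" "g p \<in> carrier_mat n n" using Suc(2)[of p] Suc(3)[of p] by simp_all
  show ?case unfolding mat_sum.simps IH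
  proof (rule eq_matI)
    fix i j assume "i < dim_row (f p + mat_sum n f p - (g p + mat_sum n g p))" "j < dim_col (f p + mat_sum n f p - (g p + mat_sum n g p))"
    hence i: "i < n" and j: "j < n" using S fp by auto
    show "(f p - g p + (mat_sum n f p - mat_sum n g p)) $$ (i,j) = (f p + mat_sum n f p - (g p + mat_sum n g p)) $$ (i,j)"
      using S fp i j by simp
  qed (insert S fp, auto)
qed

lemma mat_sum_mult_right:
  fixes f :: "nat \<Rightarrow> real mat"
  shows "(\<And>k. k < p \<Longrightarrow> f k \<in> carrier_mat n n) \<Longrightarrow> C \<in> carrier_mat n n
    \<Longrightarrow> mat_sum n (\<lambda>k. f k * C) p = mat_sum n f p * C"
proof (induct p)
  case 0 thus ?case by (intro eq_matI, auto simp: scalar_prod_def)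
next
  case (Suc p)
  have S: "mat_sum n f p \<in> carrier_mat n n" using Suc by (auto intro!: mat_sum_carrier)
  have IH: "mat_sum n (\<lambda>k. f k * C) p = mat_sum n f p * C" using Suc by auto
  show ?case using S Suc(2)[of p] Suc(3) by (simp add: IH add_mult_distrib_mat)
qed

lemma mat_mult_mono_left:
  fixes E X Y :: "real mat"
  assumes c: "E \<in> carrier_mat n n" "X \<in> carrier_mat n n" "Y \<in> carrier_mat n n"
    and E0: "0\<^sub>m n n \<le> E" and XY: "X \<le> Y"
  shows "E * X \<le> E * Y"
proof -
  have "0\<^sub>m n n \<le> Y - X" using c XY unfolding less_eq_mat_def by auto
  from mat_mult_nonneg[OF c(1) E0 _ this] have "0\<^sub>m n n \<le> E * (Y - X)" using c by (simp add: minus_carrier_mat)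
  also have "E * (Y - X) = E * Y - E * X" using c by (simp add: mult_minus_distrib_mat)
  finally show ?thesis using c unfolding less_eq_mat_def by auto
qed

lemma transpose_nonneg:
  fixes A :: "real mat"
  shows "A \<in> carrier_mat n n \<Longrightarrow> 0\<^sub>m n n \<le> A \<Longrightarrow> 0\<^sub>m n n \<le> transpose_mat A"
  unfolding less_eq_mat_def by auto

lemma transpose_mono:
  fixes A B :: "real mat"
  shows "A \<in> carrier_mat n n \<Longrightarrow> B \<in> carrier_mat n n \<Longrightarrow> A \<le> B \<Longrightarrow> transpose_mat A \<le> transpose_mat B"
  unfolding less_eq_mat_def by auto



lemma mat_sum_cong: "(\<And>k. k < p \<Longrightarrow> f k = g k) \<Longrightarrow> mat_sum n f p = mat_sum n g p"
  by (induct p, auto)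

lemma minus_eq_to_add:
  fixes A U V :: "real mat"
  assumes "A \<in> carrier_mat n n" "U \<in> carrier_mat n n" "V \<in> carrier_mat n n" "A = U - V"
  shows "V = U - A" "U = A + V"
  using assms by (auto intro!: eq_matI)

theorem corollary5p10:
  fixes n p :: nat and A Ulo Uhi Vlo Vhi :: "real mat"
    and U V E :: "nat \<Rightarrow> real mat"
  assumes "monotone_mat n A"
    and "weak_regular_multisplitting n A p U V E"
    and "Ulo \<in> carrier_mat n n" "invertible_mat Ulo"
    and "Uhi \<in> carrier_mat n n" "invertible_mat Uhi"
    and "\<forall>k<p. mat_inv Uhi \<le> mat_inv (U k) \<and> mat_inv (U k) \<le> mat_inv Ulo"
  defines "H \<equiv> mat_sum n (\<lambda>k. E k * (mat_inv (U k) * V k)) p"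
  shows "(regular_splitting n A Uhi Vhi \<longrightarrow> rho H \<le> rho (mat_inv Uhi * Vhi))
       \<and> (regular_splitting n A Ulo Vlo \<longrightarrow> rho (mat_inv Ulo * Vlo) \<le> rho H)"
proof -
  note mono = assms(1)[unfolded monotone_mat_def]
  have Ac: "A \<in> carrier_mat n n" and invA: "invertible_mat A" and Ai0: "0\<^sub>m n n \<le> mat_inv A"
    using mono by auto
  note Ai = inv_props[OF Ac invA]
  define Ai where "Ai = mat_inv A"
  have Aic: "Ai \<in> carrier_mat n n" and AAi: "A * Ai = 1\<^sub>m n" and AiA: "Ai * A = 1\<^sub>m n"
    using Ai by (auto simp: Ai_def)
  note ms = assms(2)[unfolded weak_regular_multisplitting_def weak_regular_splitting_def]
  have Esum: "mat_sum n E p = 1\<^sub>m n" using ms by auto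
  define Ui where "Ui k = mat_inv (U k)" for k
  have Uc: "U k \<in> carrier_mat n n" and Vc: "V k \<in> carrier_mat n n" and Ec: "E k \<in> carrier_mat n n"
    and E0: "0\<^sub>m n n \<le> E k" and AUV: "A = U k - V k" and invU: "invertible_mat (U k)"
    and Ui0: "0\<^sub>m n n \<le> Ui k" and UiV0: "0\<^sub>m n n \<le> Ui k * V k" if k: "k < p" for k
    using ms k by (auto simp: Ui_def)
  have Uic: "Ui k \<in> carrier_mat n n" and UiU: "Ui k * U k = 1\<^sub>m n" if k: "k < p" for k
    using inv_props[OF Uc[OF k] invU[OF k]] by (auto simp: Ui_def)
  define M where "M = mat_sum n (\<lambda>k. E k * Ui k) p"
  have EUic: "E k * Ui k \<in> carrier_mat n n" if k: "k < p" for k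
    by (rule mult_carrier_mat[OF Ec[OF k] Uic[OF k]])
  have UiVc: "Ui k * V k \<in> carrier_mat n n" if k: "k < p" for k
    by (rule mult_carrier_mat[OF Uic[OF k] Vc[OF k]])
  have EUVc: "E k * (Ui k * V k) \<in> carrier_mat n n" if k: "k < p" for k
    by (rule mult_carrier_mat[OF Ec[OF k] UiVc[OF k]])
  have EUV0: "0\<^sub>m n n \<le> E k * (Ui k * V k)" if k: "k < p" for k
    by (rule mat_mult_nonneg[OF Ec[OF k] E0[OF k] UiVc[OF k] UiV0[OF k]])
  have Hdef: "H = mat_sum n (\<lambda>k. E k * (Ui k * V k)) p" unfolding H_def Ui_def ..
  have Mc: "M \<in> carrier_mat n n" unfolding M_def by (rule mat_sum_carrier, rule EUic)
  have Hc: "H \<in> carrier_mat n n" unfolding Hdef by (rule mat_sum_carrier, rule EUVc)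
  have H0: "0\<^sub>m n n \<le> H" unfolding Hdef
    by (rule mat_sum_nonneg, rule EUVc, assumption, rule EUV0)
  have termk: "E k * (Ui k * V k) = E k - E k * Ui k * A" if k: "k < p" for k
  proof -
    have "V k = U k - A" using minus_eq_to_add(1)[OF Ac Uc[OF k] Vc[OF k] AUV[OF k]] .
    hence "Ui k * V k = Ui k * U k - Ui k * A" using Uic[OF k] Uc[OF k] Ac
      by (simp add: mult_minus_distrib_mat)
    also have "\<dots> = 1\<^sub>m n - Ui k * A" using UiU[OF k] by simp
    finally have "E k * (Ui k * V k) = E k * (1\<^sub>m n - Ui k * A)" by simp
    also have "\<dots> = E k * 1\<^sub>m n - E k * (Ui k * A)" using Ec[OF k] Uic[OF k] Ac
      by (subst mult_minus_distrib_mat[of _ n n], auto)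
    also have "\<dots> = E k - E k * Ui k * A" using Ec[OF k] Uic[OF k] Ac by simp
    finally show ?thesis .
  qed
  have HM: "H = 1\<^sub>m n - M * A"
  proof -
    have "H = mat_sum n (\<lambda>k. E k - E k * Ui k * A) p"
      unfolding Hdef by (rule mat_sum_cong, rule termk)
    also have "\<dots> = mat_sum n E p - mat_sum n (\<lambda>k. E k * Ui k * A) p"
      by (rule mat_sum_minus) (auto intro: Ec mult_carrier_mat[OF EUic Ac])
    also have "mat_sum n (\<lambda>k. E k * Ui k * A) p = M * A"
      unfolding M_def by (rule mat_sum_mult_right) (auto intro: EUic Ac)
    finally show ?thesis using Esum by simp
  qed
  have sumX: "mat_sum n (\<lambda>k. E k * X) p = X" if X: "X \<in> carrier_mat n n" for X
  proof -
    have "mat_sum n (\<lambda>k. E k * X) p = mat_sum n E p * X" by (rule mat_sum_mult_right) (auto intro: Ec X)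
    thus ?thesis using Esum X by simp
  qed
  note inh = inv_props[OF assms(5,6)] and inl = inv_props[OF assms(3,4)]
  have Mlow: "mat_inv Uhi \<le> M"
  proof -
    have "mat_sum n (\<lambda>k. E k * mat_inv Uhi) p \<le> M" unfolding M_def
    proof (rule mat_sum_mono)
      fix k assume k: "k < p"
      show "E k * mat_inv Uhi \<in> carrier_mat n n" by (rule mult_carrier_mat[OF Ec[OF k] inh(1)])
      show "E k * Ui k \<in> carrier_mat n n" by (rule EUic[OF k])
      show "E k * mat_inv Uhi \<le> E k * Ui k"
        by (rule mat_mult_mono_left[OF Ec[OF k] inh(1) Uic[OF k] E0[OF k]]) (insert assms(7) k, simp add: Ui_def)
    qed
    thus ?thesis using sumX[OF inh(1)] by simp
  qed
  have Mup: "M \<le> mat_inv Ulo"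
  proof -
    have "M \<le> mat_sum n (\<lambda>k. E k * mat_inv Ulo) p" unfolding M_def
    proof (rule mat_sum_mono)
      fix k assume k: "k < p"
      show "E k * mat_inv Ulo \<in> carrier_mat n n" by (rule mult_carrier_mat[OF Ec[OF k] inl(1)])
      show "E k * Ui k \<in> carrier_mat n n" by (rule EUic[OF k])
      show "E k * Ui k \<le> E k * mat_inv Ulo"
        by (rule mat_mult_mono_left[OF Ec[OF k] Uic[OF k] inl(1) E0[OF k]]) (insert assms(7) k, simp add: Ui_def)
    qed
    thus ?thesis using sumX[OF inl(1)] by simp
  qed
  show ?thesis
  proof (intro conjI impI)
    assume rs: "regular_splitting n A Uhi Vhi"
    define Q where "Q = mat_inv Uhi"
    have Vhc: "Vhi \<in> carrier_mat n n" and AUVh: "A = Uhi - Vhi" and Q0: "0\<^sub>m n n \<le> Q"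
      and Vh0: "0\<^sub>m n n \<le> Vhi"
      using rs unfolding regular_splitting_def Q_def by auto
    have Qc: "Q \<in> carrier_mat n n" and UQ: "Uhi * Q = 1\<^sub>m n" using inh by (auto simp: Q_def)
    have AQ: "A * Q = 1\<^sub>m n - Vhi * Q"
    proof -
      have "A * Q = Uhi * Q - Vhi * Q" unfolding AUVh using assms(5) Vhc Qc
        by (simp add: minus_mult_distrib_mat)
      thus ?thesis using UQ by simp
    qed
    have G: "transpose_mat H = 1\<^sub>m n - transpose_mat A * transpose_mat M"
    proof -
      have MA: "M * A \<in> carrier_mat n n" using Mc Ac by simp
      have "transpose_mat (1\<^sub>m n - M * A) = transpose_mat (1\<^sub>m n) - transpose_mat (M * A)"
        by (rule transpose_minus[OF one_carrier_mat MA])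
      thus ?thesis unfolding HM transpose_mult[OF Mc Ac] by simp
    qed
    have QB: "transpose_mat Q * transpose_mat A = 1\<^sub>m n - transpose_mat Q * transpose_mat Vhi"
    proof -
      have "transpose_mat Q * transpose_mat A = transpose_mat (A * Q)"
        by (rule transpose_mult[OF Ac Qc, symmetric])
      also have "\<dots> = 1\<^sub>m n - transpose_mat (Vhi * Q)" unfolding AQ
        using transpose_minus[OF one_carrier_mat mult_carrier_mat[OF Vhc Qc]] by simp
      also have "transpose_mat (Vhi * Q) = transpose_mat Q * transpose_mat Vhi"
        by (rule transpose_mult[OF Vhc Qc])
      finally show ?thesis .
    qed
    have XB: "transpose_mat Ai * transpose_mat A = 1\<^sub>m n"
      using transpose_mult[OF Ac Aic] AAi by simp
    have BX: "transpose_mat A * transpose_mat Ai = 1\<^sub>m n"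
      using transpose_mult[OF Aic Ac] AiA by simp
    have "rho (transpose_mat H) \<le> rho (transpose_mat Vhi * transpose_mat Q)"
      by (rule core_upper[OF transpose_carrier_mat[THEN iffD2, OF Ac] transpose_carrier_mat[THEN iffD2, OF Mc]
          transpose_carrier_mat[THEN iffD2, OF Qc] transpose_carrier_mat[THEN iffD2, OF Vhc]
          transpose_carrier_mat[THEN iffD2, OF Aic] transpose_carrier_mat[THEN iffD2, OF Hc]
          transpose_nonneg[OF Aic] transpose_nonneg[OF Vhc Vh0] transpose_nonneg[OF Qc Q0]
          XB BX transpose_mono[OF Qc Mc] QB G transpose_nonneg[OF Hc H0]])
        (insert Ai0 Mlow, auto simp: Ai_def Q_def)
    also have "transpose_mat Vhi * transpose_mat Q = transpose_mat (Q * Vhi)"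
      by (rule transpose_mult[OF Qc Vhc, symmetric])
    finally show "rho H \<le> rho (mat_inv Uhi * Vhi)"
      using rho_transpose[OF Hc] rho_transpose[of "Q * Vhi" n] Qc Vhc by (simp add: Q_def)
  next
    assume rs: "regular_splitting n A Ulo Vlo"
    define Q where "Q = mat_inv Ulo"
    have Vlc: "Vlo \<in> carrier_mat n n" and AUVl: "A = Ulo - Vlo" and Q0: "0\<^sub>m n n \<le> Q"
      and Vl0: "0\<^sub>m n n \<le> Vlo"
      using rs unfolding regular_splitting_def Q_def by auto
    have Qc: "Q \<in> carrier_mat n n" and UQ: "Ulo * Q = 1\<^sub>m n" using inl by (auto simp: Q_def)
    have Ul: "Ulo = A + Vlo" using minus_eq_to_add(2)[OF Ac assms(3) Vlc AUVl] .
    have AiU: "Ai * Ulo = 1\<^sub>m n + Ai * Vlo"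
      unfolding Ul using Aic Ac Vlc AiA by (simp add: mult_add_distrib_mat)
    have h1: "Ai * Vlo = Q * Vlo + Ai * Vlo * (Q * Vlo)"
    proof -
      have "Ai * Vlo = Ai * ((Ulo * Q) * Vlo)" using UQ Vlc by simp
      also have "\<dots> = (Ai * Ulo) * (Q * Vlo)" using Aic assms(3) Qc Vlc
        by (simp add: assoc_mult_mat[of Ai n n Ulo n "Q * Vlo" n])
      also have "\<dots> = Q * Vlo + Ai * Vlo * (Q * Vlo)" unfolding AiU
        using add_mult_distrib_mat[OF one_carrier_mat mult_carrier_mat[OF Aic Vlc] mult_carrier_mat[OF Qc Vlc]]
          Qc Vlc by simp
      finally show ?thesis .
    qed
    show "rho (mat_inv Ulo * Vlo) \<le> rho H"
      using core_lower[OF Ac Aic Qc Vlc Mc Hc _ Vl0 Q0 h1 AAi HM _ H0] Ai0 Mup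
      by (simp add: Ai_def Q_def)
  qed
qed


end
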